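(* For a category $\mathbb{X}$ with finite products, $\overline{\mathcal{D}}[\mathbb{X}]$ is a category, i.e. composition $\ast$ of pre-$\mathsf{D}$-sequences is associative and $i_\bullet$ is a two-sided unit.
   Context: Composition in diagrammatic order. $\mathsf{P}(A)=A\times A$, $\mathsf{P}(f)=f\times f$. A pre-$\mathsf{D}$-sequence $f_\bullet:A\to B$ is $(f_0,f_1,\dots)$ with $f_n:\mathsf{P}^n(A)\to B$. The tangent $\mathsf{T}(f_\bullet):\mathsf{P}(A)\to\mathsf{P}(B)$ is the pre-$\mathsf{D}$-sequence $\mathsf{T}(f_\bullet)_n=\langle\mathsf{P}^n(\pi_0)f_n,f_{n+1}\rangle$, with $\pi_0:\mathsf{P}(A)\to A$; $\mathsf{T}^n$ is its $n$-fold iterate, so $\mathsf{T}^n(f_\bullet)_0:\mathsf{P}^n(A)\to\mathsf{P}^n(B)$. $\overline{\mathcal{D}}[\mathbb{X}]$ has the objects of $\mathbb{X}$, pre-$\mathsf{D}$-sequences as maps, identity $i_\bullet:A\to A$ with $i_0=1_A$, $i_n=\pi_1\pi_1\cdots\pi_1:\mathsf{P}^n(A)\to A$ ($n$ projections), and composition $(f_\bullet\ast g_\bullet)_n=\mathsf{T}^n(f_\bullet)_0\,g_n$. *)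

theory Defs
  imports Main
begin

text \<open>A category with chosen finite products (binary products and a terminal object).
Composition is written in diagrammatic order: cmp f g means first f, then g.\<close>

record ('o, 'a) cartcat =
  Obj :: "'o set"
  Arr :: "'a set"
  dom :: "'a \<Rightarrow> 'o"
  cod :: "'a \<Rightarrow> 'o"
  cmp :: "'a \<Rightarrow> 'a \<Rightarrow> 'a"
  idn :: "'o \<Rightarrow> 'a"
  prd :: "'o \<Rightarrow> 'o \<Rightarrow> 'o"
  pr0 :: "'o \<Rightarrow> 'o \<Rightarrow> 'a"
  pr1 :: "'o \<Rightarrow> 'o \<Rightarrow> 'a"
  pair :: "'a \<Rightarrow> 'a \<Rightarrow> 'a"
  trm :: "'o"
  bang :: "'o \<Rightarrow> 'a"

definition Hom :: "('o, 'a, 'z) cartcat_scheme \<Rightarrow> 'o \<Rightarrow> 'o \<Rightarrow> 'a set" where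
  "Hom C a b = {f \<in> Arr C. dom C f = a \<and> cod C f = b}"

definition is_category :: "('o, 'a, 'z) cartcat_scheme \<Rightarrow> bool" where
  "is_category C \<longleftrightarrow>
     (\<forall>f \<in> Arr C. dom C f \<in> Obj C \<and> cod C f \<in> Obj C) \<and>
     (\<forall>f \<in> Arr C. \<forall>g \<in> Arr C. cod C f = dom C g \<longrightarrow>
        cmp C f g \<in> Arr C \<and> dom C (cmp C f g) = dom C f \<and> cod C (cmp C f g) = cod C g) \<and>
     (\<forall>f \<in> Arr C. \<forall>g \<in> Arr C. \<forall>h \<in> Arr C. cod C f = dom C g \<longrightarrow> cod C g = dom C h \<longrightarrow>
        cmp C (cmp C f g) h = cmp C f (cmp C g h)) \<and>
     (\<forall>a \<in> Obj C. idn C a \<in> Hom C a a) \<and>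
     (\<forall>f \<in> Arr C. cmp C (idn C (dom C f)) f = f \<and> cmp C f (idn C (cod C f)) = f)"

definition has_finite_products :: "('o, 'a, 'z) cartcat_scheme \<Rightarrow> bool" where
  "has_finite_products C \<longleftrightarrow>
     trm C \<in> Obj C \<and>
     (\<forall>a \<in> Obj C. bang C a \<in> Hom C a (trm C) \<and> (\<forall>h \<in> Hom C a (trm C). h = bang C a)) \<and>
     (\<forall>a \<in> Obj C. \<forall>b \<in> Obj C.
        prd C a b \<in> Obj C \<and> pr0 C a b \<in> Hom C (prd C a b) a \<and> pr1 C a b \<in> Hom C (prd C a b) b \<and>
        (\<forall>c \<in> Obj C. \<forall>f \<in> Hom C c a. \<forall>g \<in> Hom C c b.
           pair C f g \<in> Hom C c (prd C a b) \<and>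
           cmp C (pair C f g) (pr0 C a b) = f \<and> cmp C (pair C f g) (pr1 C a b) = g) \<and>
        (\<forall>c \<in> Obj C. \<forall>h \<in> Hom C c (prd C a b).
           h = pair C (cmp C h (pr0 C a b)) (cmp C h (pr1 C a b))))"

definition cartesian_category :: "('o, 'a, 'z) cartcat_scheme \<Rightarrow> bool" where
  "cartesian_category C \<longleftrightarrow> is_category C \<and> has_finite_products C"

definition Pob :: "('o, 'a, 'z) cartcat_scheme \<Rightarrow> 'o \<Rightarrow> 'o" where
  "Pob C a = prd C a a"

definition Parr :: "('o, 'a, 'z) cartcat_scheme \<Rightarrow> 'a \<Rightarrow> 'a" where
  "Parr C f = pair C (cmp C (pr0 C (dom C f) (dom C f)) f) (cmp C (pr1 C (dom C f) (dom C f)) f)"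

definition preD_seq :: "('o, 'a, 'z) cartcat_scheme \<Rightarrow> 'o \<Rightarrow> 'o \<Rightarrow> (nat \<Rightarrow> 'a) \<Rightarrow> bool" where
  "preD_seq C a b f \<longleftrightarrow> (\<forall>n. f n \<in> Hom C ((Pob C ^^ n) a) b)"

definition Tan :: "('o, 'a, 'z) cartcat_scheme \<Rightarrow> 'o \<Rightarrow> (nat \<Rightarrow> 'a) \<Rightarrow> (nat \<Rightarrow> 'a)" where
  "Tan C a f = (\<lambda>n. pair C (cmp C ((Parr C ^^ n) (pr0 C a a)) (f n)) (f (Suc n)))"

fun Tan_iter :: "('o, 'a, 'z) cartcat_scheme \<Rightarrow> nat \<Rightarrow> 'o \<Rightarrow> (nat \<Rightarrow> 'a) \<Rightarrow> (nat \<Rightarrow> 'a)" where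
  "Tan_iter C 0 a f = f"
| "Tan_iter C (Suc k) a f = Tan C ((Pob C ^^ k) a) (Tan_iter C k a f)"

definition Dcomp :: "('o, 'a, 'z) cartcat_scheme \<Rightarrow> 'o \<Rightarrow> (nat \<Rightarrow> 'a) \<Rightarrow> (nat \<Rightarrow> 'a) \<Rightarrow> (nat \<Rightarrow> 'a)" where
  "Dcomp C a f g = (\<lambda>n. cmp C (Tan_iter C n a f 0) (g n))"

fun Did :: "('o, 'a, 'z) cartcat_scheme \<Rightarrow> 'o \<Rightarrow> nat \<Rightarrow> 'a" where
  "Did C a 0 = idn C a"
| "Did C a (Suc 0) = pr1 C a a"
| "Did C a (Suc (Suc n)) =
     cmp C (pr1 C ((Pob C ^^ Suc n) a) ((Pob C ^^ Suc n) a)) (Did C a (Suc n))"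

end

theory Submission
  imports Defs
begin


locale cc =
  fixes C :: "('o, 'a, 'z) cartcat_scheme"
  assumes cc: "cartesian_category C"
begin

lemma cat: "is_category C" and fp: "has_finite_products C"
  using cc by (auto simp: cartesian_category_def)

lemma hom_dom: "f \<in> Hom C a b \<Longrightarrow> a \<in> Obj C"
  using cat by (auto simp: is_category_def Hom_def)
lemma hom_cod: "f \<in> Hom C a b \<Longrightarrow> b \<in> Obj C"
  using cat by (auto simp: is_category_def Hom_def)

lemma comp_hom[intro]: "f \<in> Hom C a b \<Longrightarrow> g \<in> Hom C b c \<Longrightarrow> cmp C f g \<in> Hom C a c"
  using cat by (auto simp: is_category_def Hom_def)

lemma assoc: "f \<in> Hom C a b \<Longrightarrow> g \<in> Hom C b c \<Longrightarrow> h \<in> Hom C c d \<Longrightarrow>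
   cmp C (cmp C f g) h = cmp C f (cmp C g h)"
proof -
  assume "f \<in> Hom C a b" "g \<in> Hom C b c" "h \<in> Hom C c d"
  then have "f \<in> Arr C" "g \<in> Arr C" "h \<in> Arr C" "cod C f = dom C g" "cod C g = dom C h"
    by (auto simp: Hom_def)
  moreover have "\<forall>f \<in> Arr C. \<forall>g \<in> Arr C. \<forall>h \<in> Arr C. cod C f = dom C g \<longrightarrow> cod C g = dom C h \<longrightarrow>
        cmp C (cmp C f g) h = cmp C f (cmp C g h)"
    using cat unfolding is_category_def by (elim conjE)
  ultimately show ?thesis by blast
qed

lemma id_hom[intro]: "a \<in> Obj C \<Longrightarrow> idn C a \<in> Hom C a a"
  using cat by (auto simp: is_category_def)

lemma id_left: "f \<in> Hom C a b \<Longrightarrow> cmp C (idn C a) f = f"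
  using cat by (auto simp: is_category_def Hom_def)
lemma id_right: "f \<in> Hom C a b \<Longrightarrow> cmp C f (idn C b) = f"
  using cat by (auto simp: is_category_def Hom_def)

lemma prd_ob[intro]: "a \<in> Obj C \<Longrightarrow> b \<in> Obj C \<Longrightarrow> prd C a b \<in> Obj C"
  using fp by (auto simp: has_finite_products_def)
lemma pr0_hom[intro]: "a \<in> Obj C \<Longrightarrow> b \<in> Obj C \<Longrightarrow> pr0 C a b \<in> Hom C (prd C a b) a"
  using fp by (auto simp: has_finite_products_def)
lemma pr1_hom[intro]: "a \<in> Obj C \<Longrightarrow> b \<in> Obj C \<Longrightarrow> pr1 C a b \<in> Hom C (prd C a b) b"
  using fp by (auto simp: has_finite_products_def)

lemma pair_all: "f \<in> Hom C c a \<Longrightarrow> g \<in> Hom C c b \<Longrightarrow> pair C f g \<in> Hom C c (prd C a b) \<and>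
   cmp C (pair C f g) (pr0 C a b) = f \<and> cmp C (pair C f g) (pr1 C a b) = g"
proof -
  assume f: "f \<in> Hom C c a" and g: "g \<in> Hom C c b"
  have "c \<in> Obj C" "a \<in> Obj C" "b \<in> Obj C" using f g hom_dom hom_cod by blast+
  then show ?thesis using fp f g unfolding has_finite_products_def by blast
qed
lemma pair_hom[intro]: "f \<in> Hom C c a \<Longrightarrow> g \<in> Hom C c b \<Longrightarrow> pair C f g \<in> Hom C c (prd C a b)"
  using pair_all by blast
lemma pair_pr0: "f \<in> Hom C c a \<Longrightarrow> g \<in> Hom C c b \<Longrightarrow> cmp C (pair C f g) (pr0 C a b) = f"
  using pair_all by blast
lemma pair_pr1: "f \<in> Hom C c a \<Longrightarrow> g \<in> Hom C c b \<Longrightarrow> cmp C (pair C f g) (pr1 C a b) = g"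
  using pair_all by blast
lemma pair_eta: "h \<in> Hom C c (prd C a b) \<Longrightarrow> a \<in> Obj C \<Longrightarrow> b \<in> Obj C \<Longrightarrow>
   h = pair C (cmp C h (pr0 C a b)) (cmp C h (pr1 C a b))"
proof -
  assume h: "h \<in> Hom C c (prd C a b)" and "a \<in> Obj C" "b \<in> Obj C"
  moreover have "c \<in> Obj C" using h hom_dom by blast
  ultimately show ?thesis using fp unfolding has_finite_products_def by blast
qed

lemma pair_ext: "h \<in> Hom C c (prd C a b) \<Longrightarrow> h' \<in> Hom C c (prd C a b) \<Longrightarrow> a \<in> Obj C \<Longrightarrow> b \<in> Obj C \<Longrightarrow>
   cmp C h (pr0 C a b) = cmp C h' (pr0 C a b) \<Longrightarrow> cmp C h (pr1 C a b) = cmp C h' (pr1 C a b) \<Longrightarrow> h = h'"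
  by (metis pair_eta)

lemma pair_comp: "k \<in> Hom C d c \<Longrightarrow> f \<in> Hom C c a \<Longrightarrow> g \<in> Hom C c b \<Longrightarrow>
   cmp C k (pair C f g) = pair C (cmp C k f) (cmp C k g)"
proof -
  assume k: "k \<in> Hom C d c" and f: "f \<in> Hom C c a" and g: "g \<in> Hom C c b"
  have a: "a \<in> Obj C" and b: "b \<in> Obj C" using f g hom_cod by auto
  show ?thesis
  proof (rule pair_ext[OF _ _ a b])
    show "cmp C k (pair C f g) \<in> Hom C d (prd C a b)" using k f g by auto
    show "pair C (cmp C k f) (cmp C k g) \<in> Hom C d (prd C a b)" using k f g by auto
    show "cmp C (cmp C k (pair C f g)) (pr0 C a b) = cmp C (pair C (cmp C k f) (cmp C k g)) (pr0 C a b)"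
      using k f g a b by (simp add: assoc[OF k pair_hom[OF f g] pr0_hom[OF a b]] pair_pr0 pair_pr0[OF comp_hom[OF k f] comp_hom[OF k g]])
    show "cmp C (cmp C k (pair C f g)) (pr1 C a b) = cmp C (pair C (cmp C k f) (cmp C k g)) (pr1 C a b)"
      using k f g a b by (simp add: assoc[OF k pair_hom[OF f g] pr1_hom[OF a b]] pair_pr1 pair_pr1[OF comp_hom[OF k f] comp_hom[OF k g]])
  qed
qed

lemma dom_hom: "f \<in> Hom C a b \<Longrightarrow> dom C f = a"
  by (simp add: Hom_def)

lemma Pob_ob[intro]: "a \<in> Obj C \<Longrightarrow> Pob C a \<in> Obj C"
  by (simp add: Pob_def prd_ob)

lemma Pobn_ob[intro]: "a \<in> Obj C \<Longrightarrow> (Pob C ^^ n) a \<in> Obj C"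
  by (induction n) auto

lemma Parr_all: "f \<in> Hom C a b \<Longrightarrow> Parr C f \<in> Hom C (Pob C a) (Pob C b) \<and>
  cmp C (Parr C f) (pr0 C b b) = cmp C (pr0 C a a) f \<and> cmp C (Parr C f) (pr1 C b b) = cmp C (pr1 C a a) f"
proof -
  assume f: "f \<in> Hom C a b"
  have a: "a \<in> Obj C" using f hom_dom by blast
  have 0: "cmp C (pr0 C a a) f \<in> Hom C (prd C a a) b" and 1: "cmp C (pr1 C a a) f \<in> Hom C (prd C a a) b"
    using a f by auto
  show ?thesis unfolding Parr_def dom_hom[OF f] Pob_def using pair_all[OF 0 1] by blast
qed
lemma Parr_hom[intro]: "f \<in> Hom C a b \<Longrightarrow> Parr C f \<in> Hom C (Pob C a) (Pob C b)"
  using Parr_all by blast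
lemma Parr_pr0: "f \<in> Hom C a b \<Longrightarrow> cmp C (Parr C f) (pr0 C b b) = cmp C (pr0 C a a) f"
  using Parr_all by blast
lemma Parr_pr1: "f \<in> Hom C a b \<Longrightarrow> cmp C (Parr C f) (pr1 C b b) = cmp C (pr1 C a a) f"
  using Parr_all by blast

lemma pair_Parr: "f \<in> Hom C c a \<Longrightarrow> g \<in> Hom C c a \<Longrightarrow> h \<in> Hom C a b \<Longrightarrow>
   cmp C (pair C f g) (Parr C h) = pair C (cmp C f h) (cmp C g h)"
proof -
  assume f: "f \<in> Hom C c a" and g: "g \<in> Hom C c a" and h: "h \<in> Hom C a b"
  have a: "a \<in> Obj C" using h hom_dom by auto
  have "cmp C (pair C f g) (Parr C h) = pair C (cmp C (pair C f g) (cmp C (pr0 C a a) h)) (cmp C (pair C f g) (cmp C (pr1 C a a) h))"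
    unfolding Parr_def dom_hom[OF h] using pair_comp f g h a by blast
  also have "\<dots> = pair C (cmp C f h) (cmp C g h)"
    using f g h a by (simp add: assoc[symmetric, OF pair_hom[OF f g] pr0_hom[OF a a] h] 
        assoc[symmetric, OF pair_hom[OF f g] pr1_hom[OF a a] h] pair_pr0 pair_pr1)
  finally show ?thesis .
qed

lemma Parr_comp: "f \<in> Hom C a b \<Longrightarrow> g \<in> Hom C b c \<Longrightarrow> Parr C (cmp C f g) = cmp C (Parr C f) (Parr C g)"
proof -
  assume f: "f \<in> Hom C a b" and g: "g \<in> Hom C b c"
  have a: "a \<in> Obj C" using f hom_dom by auto
  have fg: "cmp C f g \<in> Hom C a c" using f g by auto
  have "cmp C (Parr C f) (Parr C g) = pair C (cmp C (cmp C (pr0 C a a) f) g) (cmp C (cmp C (pr1 C a a) f) g)"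
    unfolding Parr_def[of C f] dom_hom[OF f] using a f g by (intro pair_Parr) auto
  also have "\<dots> = Parr C (cmp C f g)"
    unfolding Parr_def dom_hom[OF fg] using a f g by (simp add: assoc[OF pr0_hom[OF a a] f g] assoc[OF pr1_hom[OF a a] f g])
  finally show ?thesis by simp
qed

lemma Parrn_hom[intro]: "f \<in> Hom C a b \<Longrightarrow> (Parr C ^^ n) f \<in> Hom C ((Pob C ^^ n) a) ((Pob C ^^ n) b)"
  by (induction n) auto

lemma Parrn_comp: "f \<in> Hom C a b \<Longrightarrow> g \<in> Hom C b c \<Longrightarrow>
   (Parr C ^^ n) (cmp C f g) = cmp C ((Parr C ^^ n) f) ((Parr C ^^ n) g)"
proof (induction n)
  case (Suc n)
  then show ?case using Parr_comp[OF Parrn_hom[OF Suc(2)] Parrn_hom[OF Suc(3)]] by simp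
qed simp

end


definition lc :: "('o, 'a, 'z) cartcat_scheme \<Rightarrow> 'a \<Rightarrow> (nat \<Rightarrow> 'a) \<Rightarrow> (nat \<Rightarrow> 'a)" where
  "lc C al h = (\<lambda>m. cmp C ((Parr C ^^ m) al) (h m))"
definition rc :: "('o, 'a, 'z) cartcat_scheme \<Rightarrow> (nat \<Rightarrow> 'a) \<Rightarrow> 'a \<Rightarrow> (nat \<Rightarrow> 'a)" where
  "rc C h be = (\<lambda>m. cmp C (h m) be)"

context cc
begin

lemma Pobn_swap[simp]: "(Pob C ^^ n) (Pob C a) = Pob C ((Pob C ^^ n) a)"
  by (simp add: funpow_swap1)
lemma Parrn_swap[simp]: "(Parr C ^^ n) (Parr C a) = Parr C ((Parr C ^^ n) a)"
  by (simp add: funpow_swap1)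

lemma preD_at: "preD_seq C a b h \<Longrightarrow> h m \<in> Hom C ((Pob C ^^ m) a) b"
  by (simp add: preD_seq_def)

lemma preD_obj: "preD_seq C a b h \<Longrightarrow> a \<in> Obj C \<and> b \<in> Obj C"
  using preD_at[of a b h 0] hom_dom hom_cod by auto

lemma Tan_comp:
  assumes h: "preD_seq C a b h"
  shows "Tan C a h m \<in> Hom C (Pob C ((Pob C ^^ m) a)) (Pob C b) \<and>
    cmp C (Tan C a h m) (pr0 C b b) = cmp C ((Parr C ^^ m) (pr0 C a a)) (h m) \<and>
    cmp C (Tan C a h m) (pr1 C b b) = h (Suc m)"
proof -
  have a: "a \<in> Obj C" and b: "b \<in> Obj C" using preD_obj[OF h] by auto
  have X: "(Parr C ^^ m) (pr0 C a a) \<in> Hom C (Pob C ((Pob C ^^ m) a)) ((Pob C ^^ m) a)"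
    using Parrn_hom[OF pr0_hom[OF a a], of m] by (simp add: Pob_def[symmetric])
  have 0: "cmp C ((Parr C ^^ m) (pr0 C a a)) (h m) \<in> Hom C (Pob C ((Pob C ^^ m) a)) b"
    using X preD_at[OF h, of m] by auto
  have 1: "h (Suc m) \<in> Hom C (Pob C ((Pob C ^^ m) a)) b"
    using preD_at[OF h, of "Suc m"] by simp
  show ?thesis unfolding Tan_def using pair_all[OF 0 1] by (simp add: Pob_def)
qed

lemma Tan_preD: "preD_seq C a b h \<Longrightarrow> preD_seq C (Pob C a) (Pob C b) (Tan C a h)"
  using Tan_comp by (simp add: preD_seq_def)

lemma Tan_iter_preD: "preD_seq C a b f \<Longrightarrow> preD_seq C ((Pob C ^^ n) a) ((Pob C ^^ n) b) (Tan_iter C n a f)"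
  by (induction n) (auto intro: Tan_preD)

lemma lc_preD: "al \<in> Hom C a' a \<Longrightarrow> preD_seq C a b h \<Longrightarrow> preD_seq C a' b (lc C al h)"
  unfolding preD_seq_def lc_def by auto

lemma rc_preD: "be \<in> Hom C b b' \<Longrightarrow> preD_seq C a b h \<Longrightarrow> preD_seq C a b' (rc C h be)"
  unfolding preD_seq_def rc_def by auto

lemma Tan_lc:
  assumes al: "al \<in> Hom C a' a" and h: "preD_seq C a b h"
  shows "Tan C a' (lc C al h) = lc C (Parr C al) (Tan C a h)"
proof
  fix m
  have a: "a \<in> Obj C" and b: "b \<in> Obj C" using preD_obj[OF h] by auto
  have a': "a' \<in> Obj C" using al hom_dom by auto
  have hm: "h m \<in> Hom C ((Pob C ^^ m) a) b" using preD_at[OF h] by auto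
  have hs: "h (Suc m) \<in> Hom C (Pob C ((Pob C ^^ m) a)) b" using preD_at[OF h, of "Suc m"] by simp
  have P0': "(Parr C ^^ m) (pr0 C a' a') \<in> Hom C (Pob C ((Pob C ^^ m) a')) ((Pob C ^^ m) a')"
    using Parrn_hom[OF pr0_hom[OF a' a'], of m] by (simp add: Pob_def[symmetric])
  have P0: "(Parr C ^^ m) (pr0 C a a) \<in> Hom C (Pob C ((Pob C ^^ m) a)) ((Pob C ^^ m) a)"
    using Parrn_hom[OF pr0_hom[OF a a], of m] by (simp add: Pob_def[symmetric])
  have Am: "(Parr C ^^ m) al \<in> Hom C ((Pob C ^^ m) a') ((Pob C ^^ m) a)" using al by auto
  have PA: "Parr C ((Parr C ^^ m) al) \<in> Hom C (Pob C ((Pob C ^^ m) a')) (Pob C ((Pob C ^^ m) a))"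
    using Am by auto
  have PAm: "(Parr C ^^ m) (Parr C al) = Parr C ((Parr C ^^ m) al)" by simp
  have pr0al: "cmp C (pr0 C a' a') al = cmp C (Parr C al) (pr0 C a a)"
    using Parr_pr0[OF al] by simp
  have c1: "cmp C ((Parr C ^^ m) (pr0 C a' a')) (cmp C ((Parr C ^^ m) al) (h m))
      = cmp C ((Parr C ^^ m) (Parr C al)) (cmp C ((Parr C ^^ m) (pr0 C a a)) (h m))"
  proof -
    have "cmp C ((Parr C ^^ m) (pr0 C a' a')) (cmp C ((Parr C ^^ m) al) (h m))
        = cmp C (cmp C ((Parr C ^^ m) (pr0 C a' a')) ((Parr C ^^ m) al)) (h m)"
      using assoc[OF P0' Am hm] by simp
    also have "\<dots> = cmp C ((Parr C ^^ m) (cmp C (pr0 C a' a') al)) (h m)"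
      using Parrn_comp[OF pr0_hom[OF a' a'] al] by simp
    also have "\<dots> = cmp C ((Parr C ^^ m) (cmp C (Parr C al) (pr0 C a a))) (h m)"
      using pr0al by simp
    also have "\<dots> = cmp C (cmp C ((Parr C ^^ m) (Parr C al)) ((Parr C ^^ m) (pr0 C a a))) (h m)"
      using Parrn_comp[OF Parr_hom[OF al] pr0_hom[OF a a, folded Pob_def]] by simp
    also have "\<dots> = cmp C ((Parr C ^^ m) (Parr C al)) (cmp C ((Parr C ^^ m) (pr0 C a a)) (h m))"
      using assoc[OF PA P0 hm] by simp
    finally show ?thesis .
  qed
  have "lc C (Parr C al) (Tan C a h) m = cmp C ((Parr C ^^ m) (Parr C al))
      (pair C (cmp C ((Parr C ^^ m) (pr0 C a a)) (h m)) (h (Suc m)))"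
    by (simp add: lc_def Tan_def)
  also have "\<dots> = pair C (cmp C ((Parr C ^^ m) (Parr C al)) (cmp C ((Parr C ^^ m) (pr0 C a a)) (h m)))
      (cmp C ((Parr C ^^ m) (Parr C al)) (h (Suc m)))"
    using pair_comp[OF PA comp_hom[OF P0 hm] hs] by simp
  also have "\<dots> = Tan C a' (lc C al h) m"
    using c1 by (simp add: lc_def Tan_def)
  finally show "Tan C a' (lc C al h) m = lc C (Parr C al) (Tan C a h) m" by simp
qed

lemma Tan_rc:
  assumes be: "be \<in> Hom C b b'" and h: "preD_seq C a b h"
  shows "Tan C a (rc C h be) = rc C (Tan C a h) (Parr C be)"
proof
  fix m
  have a: "a \<in> Obj C" and b: "b \<in> Obj C" using preD_obj[OF h] by auto
  have hm: "h m \<in> Hom C ((Pob C ^^ m) a) b" using preD_at[OF h] by auto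
  have hs: "h (Suc m) \<in> Hom C (Pob C ((Pob C ^^ m) a)) b" using preD_at[OF h, of "Suc m"] by simp
  have P0: "(Parr C ^^ m) (pr0 C a a) \<in> Hom C (Pob C ((Pob C ^^ m) a)) ((Pob C ^^ m) a)"
    using Parrn_hom[OF pr0_hom[OF a a], of m] by (simp add: Pob_def[symmetric])
  have "rc C (Tan C a h) (Parr C be) m = cmp C (pair C (cmp C ((Parr C ^^ m) (pr0 C a a)) (h m)) (h (Suc m))) (Parr C be)"
    by (simp add: rc_def Tan_def)
  also have "\<dots> = pair C (cmp C (cmp C ((Parr C ^^ m) (pr0 C a a)) (h m)) be) (cmp C (h (Suc m)) be)"
    using pair_Parr[OF comp_hom[OF P0 hm] hs be] by simp
  also have "\<dots> = Tan C a (rc C h be) m"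
    using assoc[OF P0 hm be] by (simp add: rc_def Tan_def)
  finally show "Tan C a (rc C h be) m = rc C (Tan C a h) (Parr C be) m" by simp
qed

lemma Tan_iter_lc:
  "al \<in> Hom C a' a \<Longrightarrow> preD_seq C a b h \<Longrightarrow>
   Tan_iter C n a' (lc C al h) = lc C ((Parr C ^^ n) al) (Tan_iter C n a h)"
proof (induction n)
  case 0 then show ?case by simp
next
  case (Suc n)
  have "Tan_iter C (Suc n) a' (lc C al h) = Tan C ((Pob C ^^ n) a') (lc C ((Parr C ^^ n) al) (Tan_iter C n a h))"
    using Suc by simp
  also have "\<dots> = lc C (Parr C ((Parr C ^^ n) al)) (Tan C ((Pob C ^^ n) a) (Tan_iter C n a h))"
    using Tan_lc[OF Parrn_hom[OF Suc(2)] Tan_iter_preD[OF Suc(3)]] by simp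
  finally show ?case by simp
qed

lemma Tan_iter_rc:
  "be \<in> Hom C b b' \<Longrightarrow> preD_seq C a b h \<Longrightarrow>
   Tan_iter C n a (rc C h be) = rc C (Tan_iter C n a h) ((Parr C ^^ n) be)"
proof (induction n)
  case 0 then show ?case by simp
next
  case (Suc n)
  have "Tan_iter C (Suc n) a (rc C h be) = Tan C ((Pob C ^^ n) a) (rc C (Tan_iter C n a h) ((Parr C ^^ n) be))"
    using Suc by simp
  also have "\<dots> = rc C (Tan C ((Pob C ^^ n) a) (Tan_iter C n a h)) (Parr C ((Parr C ^^ n) be))"
    using Tan_rc[OF Parrn_hom[OF Suc(2)] Tan_iter_preD[OF Suc(3)]] by simp
  finally show ?case by simp
qed

lemma rc_pr0: "preD_seq C a b h \<Longrightarrow> rc C (Tan C a h) (pr0 C b b) = lc C (pr0 C a a) h"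
  using Tan_comp by (auto simp: rc_def lc_def)

lemma Tan_iter_shift: "Tan_iter C (Suc n) a h = Tan_iter C n (Pob C a) (Tan C a h)"
  by (induction n) simp_all

lemma key:
  assumes f: "preD_seq C a b f"
  shows "cmp C (Tan_iter C (Suc n) a f 0) ((Parr C ^^ n) (pr0 C b b))
       = cmp C ((Parr C ^^ n) (pr0 C a a)) (Tan_iter C n a f 0)"
proof -
  have a: "a \<in> Obj C" and b: "b \<in> Obj C" using preD_obj[OF f] by auto
  have "rc C (Tan_iter C n (Pob C a) (Tan C a f)) ((Parr C ^^ n) (pr0 C b b))
      = Tan_iter C n (Pob C a) (rc C (Tan C a f) (pr0 C b b))"
    using Tan_iter_rc[OF pr0_hom[OF b b, folded Pob_def] Tan_preD[OF f]] by simp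
  also have "\<dots> = Tan_iter C n (Pob C a) (lc C (pr0 C a a) f)"
    using rc_pr0[OF f] by simp
  also have "\<dots> = lc C ((Parr C ^^ n) (pr0 C a a)) (Tan_iter C n a f)"
    using Tan_iter_lc[OF pr0_hom[OF a a, folded Pob_def] f] by simp
  finally have "rc C (Tan_iter C n (Pob C a) (Tan C a f)) ((Parr C ^^ n) (pr0 C b b)) 0
      = lc C ((Parr C ^^ n) (pr0 C a a)) (Tan_iter C n a f) 0" by simp
  then show ?thesis unfolding Tan_iter_shift by (simp add: rc_def lc_def)
qed

end


context cc
begin

lemma Tan_iter_at: "preD_seq C a b f \<Longrightarrow> Tan_iter C n a f 0 \<in> Hom C ((Pob C ^^ n) a) ((Pob C ^^ n) b)"
  using preD_at[OF Tan_iter_preD, of a b f n 0] by simp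

lemma Dcomp_preD: "preD_seq C a b f \<Longrightarrow> preD_seq C b c g \<Longrightarrow> preD_seq C a c (Dcomp C a f g)"
  unfolding preD_seq_def[of C a c] Dcomp_def using Tan_iter_at preD_at by blast

lemma Tan_Dcomp:
  assumes f: "preD_seq C a b f" and g: "preD_seq C b c g"
  shows "Tan C a (Dcomp C a f g) = Dcomp C (Pob C a) (Tan C a f) (Tan C b g)"
proof
  fix m
  have a: "a \<in> Obj C" and b: "b \<in> Obj C" using preD_obj[OF f] by auto
  have gm: "g m \<in> Hom C ((Pob C ^^ m) b) c" using preD_at[OF g] by auto
  have gs: "g (Suc m) \<in> Hom C (Pob C ((Pob C ^^ m) b)) c" using preD_at[OF g, of "Suc m"] by simp
  have P0a: "(Parr C ^^ m) (pr0 C a a) \<in> Hom C (Pob C ((Pob C ^^ m) a)) ((Pob C ^^ m) a)"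
    using Parrn_hom[OF pr0_hom[OF a a], of m] by (simp add: Pob_def[symmetric])
  have P0b: "(Parr C ^^ m) (pr0 C b b) \<in> Hom C (Pob C ((Pob C ^^ m) b)) ((Pob C ^^ m) b)"
    using Parrn_hom[OF pr0_hom[OF b b], of m] by (simp add: Pob_def[symmetric])
  have Tm: "Tan_iter C m a f 0 \<in> Hom C ((Pob C ^^ m) a) ((Pob C ^^ m) b)" using Tan_iter_at[OF f] .
  have Ts: "Tan_iter C (Suc m) a f 0 \<in> Hom C (Pob C ((Pob C ^^ m) a)) (Pob C ((Pob C ^^ m) b))"
    using Tan_iter_at[OF f, of "Suc m"] by simp
  have c1: "cmp C ((Parr C ^^ m) (pr0 C a a)) (cmp C (Tan_iter C m a f 0) (g m))
     = cmp C (Tan_iter C (Suc m) a f 0) (cmp C ((Parr C ^^ m) (pr0 C b b)) (g m))"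
    using assoc[OF P0a Tm gm] assoc[OF Ts P0b gm] key[OF f, of m] by simp
  have "Dcomp C (Pob C a) (Tan C a f) (Tan C b g) m
      = cmp C (Tan_iter C (Suc m) a f 0) (pair C (cmp C ((Parr C ^^ m) (pr0 C b b)) (g m)) (g (Suc m)))"
    unfolding Dcomp_def Tan_iter_shift[symmetric] by (simp add: Tan_def)
  also have "\<dots> = pair C (cmp C (Tan_iter C (Suc m) a f 0) (cmp C ((Parr C ^^ m) (pr0 C b b)) (g m)))
      (cmp C (Tan_iter C (Suc m) a f 0) (g (Suc m)))"
    using pair_comp[OF Ts comp_hom[OF P0b gm] gs] .
  also have "\<dots> = Tan C a (Dcomp C a f g) m"
    using c1 by (simp add: Tan_def Dcomp_def)
  finally show "Tan C a (Dcomp C a f g) m = Dcomp C (Pob C a) (Tan C a f) (Tan C b g) m" by simp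
qed

lemma Tan_iter_Dcomp:
  "preD_seq C a b f \<Longrightarrow> preD_seq C b c g \<Longrightarrow>
   Tan_iter C n a (Dcomp C a f g) = Dcomp C ((Pob C ^^ n) a) (Tan_iter C n a f) (Tan_iter C n b g)"
proof (induction n)
  case 0 then show ?case by simp
next
  case (Suc n)
  then show ?case
    using Tan_Dcomp[OF Tan_iter_preD[OF Suc(2)] Tan_iter_preD[OF Suc(3)], of n] by simp
qed

lemma Dcomp_assoc:
  assumes f: "preD_seq C a b f" and g: "preD_seq C b c g" and h: "preD_seq C c d h"
  shows "Dcomp C a (Dcomp C a f g) h = Dcomp C a f (Dcomp C b g h)"
proof
  fix n
  have "Dcomp C a (Dcomp C a f g) h n = cmp C (cmp C (Tan_iter C n a f 0) (Tan_iter C n b g 0)) (h n)"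
    unfolding Dcomp_def[of C a "Dcomp C a f g"] Tan_iter_Dcomp[OF f g] by (simp add: Dcomp_def)
  also have "\<dots> = cmp C (Tan_iter C n a f 0) (cmp C (Tan_iter C n b g 0) (h n))"
    using assoc[OF Tan_iter_at[OF f] Tan_iter_at[OF g] preD_at[OF h]] .
  also have "\<dots> = Dcomp C a f (Dcomp C b g h) n" by (simp add: Dcomp_def)
  finally show "Dcomp C a (Dcomp C a f g) h n = Dcomp C a f (Dcomp C b g h) n" .
qed

lemma Did_Suc: "a \<in> Obj C \<Longrightarrow> Did C a (Suc m) = cmp C (pr1 C ((Pob C ^^ m) a) ((Pob C ^^ m) a)) (Did C a m)"
  by (cases m) (auto simp: id_right[OF pr1_hom[OF _ _, of a a, folded Pob_def]])

lemma Did_hom: "a \<in> Obj C \<Longrightarrow> Did C a m \<in> Hom C ((Pob C ^^ m) a) a"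
proof (induction m)
  case 0 then show ?case by auto
next
  case (Suc m)
  have p: "pr1 C ((Pob C ^^ m) a) ((Pob C ^^ m) a) \<in> Hom C (Pob C ((Pob C ^^ m) a)) ((Pob C ^^ m) a)"
    using pr1_hom[OF Pobn_ob[OF Suc(2)] Pobn_ob[OF Suc(2)]] by (simp add: Pob_def)
  show ?case using Did_Suc[OF Suc(2), of m] comp_hom[OF p Suc(1)[OF Suc(2)]] by simp
qed

lemma Did_preD: "a \<in> Obj C \<Longrightarrow> preD_seq C a a (Did C a)"
  using Did_hom by (simp add: preD_seq_def)

lemma Did_nat: "al \<in> Hom C a b \<Longrightarrow> cmp C (Did C a m) al = cmp C ((Parr C ^^ m) al) (Did C b m)"
proof (induction m)
  case 0
  then show ?case using id_left id_right hom_dom hom_cod by simp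
next
  case (Suc m)
  have a: "a \<in> Obj C" and b: "b \<in> Obj C" using Suc(2) hom_dom hom_cod by auto
  have p1a: "pr1 C ((Pob C ^^ m) a) ((Pob C ^^ m) a) \<in> Hom C (Pob C ((Pob C ^^ m) a)) ((Pob C ^^ m) a)"
    using pr1_hom[OF Pobn_ob[OF a] Pobn_ob[OF a]] by (simp add: Pob_def)
  have p1b: "pr1 C ((Pob C ^^ m) b) ((Pob C ^^ m) b) \<in> Hom C (Pob C ((Pob C ^^ m) b)) ((Pob C ^^ m) b)"
    using pr1_hom[OF Pobn_ob[OF b] Pobn_ob[OF b]] by (simp add: Pob_def)
  have Am: "(Parr C ^^ m) al \<in> Hom C ((Pob C ^^ m) a) ((Pob C ^^ m) b)" using Suc(2) by auto
  have "cmp C (Did C a (Suc m)) al = cmp C (pr1 C ((Pob C ^^ m) a) ((Pob C ^^ m) a)) (cmp C (Did C a m) al)"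
    using Did_Suc[OF a] assoc[OF p1a Did_hom[OF a] Suc(2)] by simp
  also have "\<dots> = cmp C (cmp C (pr1 C ((Pob C ^^ m) a) ((Pob C ^^ m) a)) ((Parr C ^^ m) al)) (Did C b m)"
    using Suc assoc[OF p1a Am Did_hom[OF b]] by simp
  also have "\<dots> = cmp C (cmp C (Parr C ((Parr C ^^ m) al)) (pr1 C ((Pob C ^^ m) b) ((Pob C ^^ m) b))) (Did C b m)"
    using Parr_pr1[OF Am] by (simp add: Pob_def)
  also have "\<dots> = cmp C ((Parr C ^^ Suc m) al) (Did C b (Suc m))"
    using assoc[OF Parr_hom[OF Am] p1b Did_hom[OF b]] Did_Suc[OF b] by simp
  finally show ?case .
qed

lemma Did_Suc2: "a \<in> Obj C \<Longrightarrow> Did C a (Suc m) = cmp C (Did C (Pob C a) m) (pr1 C a a)"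
proof (induction m)
  case 0 then show ?case using id_left[OF pr1_hom[OF 0 0]] by (simp add: Pob_def)
next
  case (Suc m)
  have a: "a \<in> Obj C" by fact
  have pa: "Pob C a \<in> Obj C" using a by auto
  have p1: "pr1 C (Pob C ((Pob C ^^ m) a)) (Pob C ((Pob C ^^ m) a)) \<in> Hom C (Pob C (Pob C ((Pob C ^^ m) a))) (Pob C ((Pob C ^^ m) a))"
    using pr1_hom[OF Pob_ob Pob_ob, OF Pobn_ob Pobn_ob, OF a a, of m m] by (simp add: Pob_def)
  have D: "Did C (Pob C a) m \<in> Hom C (Pob C ((Pob C ^^ m) a)) (Pob C a)"
    using Did_hom[OF pa, of m] by simp
  have "Did C a (Suc (Suc m)) = cmp C (pr1 C (Pob C ((Pob C ^^ m) a)) (Pob C ((Pob C ^^ m) a))) (Did C a (Suc m))"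
    using Did_Suc[OF a, of "Suc m"] by simp
  also have "\<dots> = cmp C (pr1 C (Pob C ((Pob C ^^ m) a)) (Pob C ((Pob C ^^ m) a))) (cmp C (Did C (Pob C a) m) (pr1 C a a))"
    using Suc by simp
  also have "\<dots> = cmp C (cmp C (pr1 C (Pob C ((Pob C ^^ m) a)) (Pob C ((Pob C ^^ m) a))) (Did C (Pob C a) m)) (pr1 C a a)"
    using assoc[OF p1 D pr1_hom[OF a a, folded Pob_def]] by simp
  also have "\<dots> = cmp C (Did C (Pob C a) (Suc m)) (pr1 C a a)"
    using Did_Suc[OF pa, of m] by simp
  finally show ?case .
qed

lemma Tan_Did: "a \<in> Obj C \<Longrightarrow> Tan C a (Did C a) = Did C (Pob C a)"
proof
  fix m
  assume a: "a \<in> Obj C"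
  have T: "Tan C a (Did C a) m \<in> Hom C (Pob C ((Pob C ^^ m) a)) (Pob C a) \<and>
    cmp C (Tan C a (Did C a) m) (pr0 C a a) = cmp C ((Parr C ^^ m) (pr0 C a a)) (Did C a m) \<and>
    cmp C (Tan C a (Did C a) m) (pr1 C a a) = Did C a (Suc m)"
    using Tan_comp[OF Did_preD[OF a]] .
  have D: "Did C (Pob C a) m \<in> Hom C (Pob C ((Pob C ^^ m) a)) (Pob C a)"
    using Did_hom[OF Pob_ob[OF a], of m] by simp
  show "Tan C a (Did C a) m = Did C (Pob C a) m"
  proof (rule pair_ext[OF _ _ a a])
    show "Tan C a (Did C a) m \<in> Hom C (Pob C ((Pob C ^^ m) a)) (prd C a a)" using T by (simp add: Pob_def)
    show "Did C (Pob C a) m \<in> Hom C (Pob C ((Pob C ^^ m) a)) (prd C a a)" using D by (simp add: Pob_def)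
    show "cmp C (Tan C a (Did C a) m) (pr0 C a a) = cmp C (Did C (Pob C a) m) (pr0 C a a)"
      using T Did_nat[OF pr0_hom[OF a a, folded Pob_def], of m] by simp
    show "cmp C (Tan C a (Did C a) m) (pr1 C a a) = cmp C (Did C (Pob C a) m) (pr1 C a a)"
      using T Did_Suc2[OF a] by simp
  qed
qed

lemma Tan_iter_Did: "a \<in> Obj C \<Longrightarrow> Tan_iter C n a (Did C a) = Did C ((Pob C ^^ n) a)"
  by (induction n) (auto simp: Tan_Did Pobn_ob)

lemma left_unit: "preD_seq C a b f \<Longrightarrow> Dcomp C a (Did C a) f = f"
proof
  fix n assume f: "preD_seq C a b f"
  have a: "a \<in> Obj C" using preD_obj[OF f] by auto
  show "Dcomp C a (Did C a) f n = f n"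
    unfolding Dcomp_def Tan_iter_Did[OF a] using id_left[OF preD_at[OF f]] by simp
qed

lemma right_gen: "preD_seq C a b f \<Longrightarrow> cmp C (Tan_iter C k a f j) (Did C b k) = f (j + k)"
proof (induction k arbitrary: j)
  case 0
  then show ?case using id_right[OF preD_at[OF 0]] by simp
next
  case (Suc k)
  have b: "b \<in> Obj C" using preD_obj[OF Suc(2)] by auto
  have Tk: "preD_seq C ((Pob C ^^ k) a) ((Pob C ^^ k) b) (Tan_iter C k a f)" using Tan_iter_preD[OF Suc(2)] .
  note TT = Tan_comp[OF Tk, of j]
  have p1: "pr1 C ((Pob C ^^ k) b) ((Pob C ^^ k) b) \<in> Hom C (Pob C ((Pob C ^^ k) b)) ((Pob C ^^ k) b)"
    using pr1_hom[OF Pobn_ob[OF b] Pobn_ob[OF b]] by (simp add: Pob_def)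
  have "cmp C (Tan_iter C (Suc k) a f j) (Did C b (Suc k))
     = cmp C (Tan C ((Pob C ^^ k) a) (Tan_iter C k a f) j) (cmp C (pr1 C ((Pob C ^^ k) b) ((Pob C ^^ k) b)) (Did C b k))"
    using Did_Suc[OF b] by simp
  also have "\<dots> = cmp C (cmp C (Tan C ((Pob C ^^ k) a) (Tan_iter C k a f) j) (pr1 C ((Pob C ^^ k) b) ((Pob C ^^ k) b))) (Did C b k)"
    using assoc[OF conjunct1[OF TT] p1 Did_hom[OF b]] by simp
  also have "\<dots> = cmp C (Tan_iter C k a f (Suc j)) (Did C b k)" using TT by simp
  also have "\<dots> = f (j + Suc k)" using Suc by simp
  finally show ?case .
qed

lemma right_unit: "preD_seq C a b f \<Longrightarrow> Dcomp C a f (Did C b) = f"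
  using right_gen[of a b f _ 0] by (auto simp: Dcomp_def)

end

theorem proposition3p7:
  fixes C :: "('o, 'a, 'z) cartcat_scheme"
  assumes "cartesian_category C"
  shows "(\<forall>a b c f g. a \<in> Obj C \<longrightarrow> b \<in> Obj C \<longrightarrow> c \<in> Obj C \<longrightarrow>
            preD_seq C a b f \<longrightarrow> preD_seq C b c g \<longrightarrow> preD_seq C a c (Dcomp C a f g))
       \<and> (\<forall>a. a \<in> Obj C \<longrightarrow> preD_seq C a a (Did C a))
       \<and> (\<forall>a b c d f g h. a \<in> Obj C \<longrightarrow> b \<in> Obj C \<longrightarrow> c \<in> Obj C \<longrightarrow> d \<in> Obj C \<longrightarrow>
            preD_seq C a b f \<longrightarrow> preD_seq C b c g \<longrightarrow> preD_seq C c d h \<longrightarrow>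
            Dcomp C a (Dcomp C a f g) h = Dcomp C a f (Dcomp C b g h))
       \<and> (\<forall>a b f. a \<in> Obj C \<longrightarrow> b \<in> Obj C \<longrightarrow> preD_seq C a b f \<longrightarrow>
            Dcomp C a (Did C a) f = f \<and> Dcomp C a f (Did C b) = f)"
proof -
  interpret cc C using assms by unfold_locales
  show ?thesis
  proof (intro conjI allI impI)
    fix a b c f g assume "preD_seq C a b f" "preD_seq C b c g"
    then show "preD_seq C a c (Dcomp C a f g)" by (rule Dcomp_preD)
  next
    fix a :: 'o assume "a \<in> Obj C"
    then show "preD_seq C a a (Did C a)" by (rule Did_preD)
  next
    fix a b c d f g h assume "preD_seq C a b f" "preD_seq C b c g" "preD_seq C c d h"
    then show "Dcomp C a (Dcomp C a f g) h = Dcomp C a f (Dcomp C b g h)" by (rule Dcomp_assoc)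
  next
    fix a b f assume "preD_seq C a b f"
    then show "Dcomp C a (Did C a) f = f" by (rule left_unit)
  next
    fix a b f assume "preD_seq C a b f"
    then show "Dcomp C a f (Did C b) = f" by (rule right_unit)
  qed
qed

end
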